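(* Let $d\ge 1$, $\sigma>0$, $A\in\mathbb{R}^{d\times d}$ symmetric positive definite, $\theta \in \mathbb{R}^d\setminus\{0\}$, and let $N_e$ be a positive integer multiple of $d$. Suppose $x_1,\dots,x_{N_e}$ are deterministic actions obtained by round-robin exploration (playing $A^{1/2}e_j$ with $j$ cycling through $1,\dots,d$, so each is played $N_e/d$ times), and $y_t = x_t^\top\theta + z_t$ where the $z_t$ are independent, centered and $\sigma^2$-subgaussian. Let $X \in \mathbb{R}^{N_e\times d}$ have rows $x_t^\top$, $Y = (y_t)_t$, and $\hat\theta = (X^\top X)^{-1}X^\top Y$. Then, with $x^\star(u) := Au/\|u\|_A$ for $u\ne 0$ (and $x^\star(0)$ any point of $\{x:\|x\|_{A^{-1}}\le 1\}$), $$\mathbb{E}\big[\theta^\top\big(x^\star(\theta) - x^\star(\hat\theta)\big)\big] \le \frac{d^2\sigma^2}{\|\theta\|_A N_e} + 2\|\theta\|_A\, \exp\Big( \big(2d/3 - N_e\|\theta\|_A^2/(3\sigma^2 d)\big)^- \Big).$$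
   Context: $\|u\|_M := \sqrt{u^\top M u}$ for symmetric positive definite $M$; $e_1,\dots,e_d$ is the standard basis of $\mathbb{R}^d$; $A^{1/2}$ is the symmetric positive definite square root. A centered random variable $z$ is $\sigma^2$-subgaussian if $\mathbb{E}[e^{\lambda z}]\le e^{\lambda^2\sigma^2/2}$ for all $\lambda\in\mathbb{R}$. For real $x$, $(x)^- := \min(x,0)$. Note that with round-robin exploration $X^\top X = (N_e/d)A$. The vector $x^\star(u)$ maximizes $x^\top u$ over the centered ellipsoid $\{x:\|x\|_{A^{-1}}\le 1\}$. *)

theory Defs
  imports "HOL-Analysis.Analysis" "HOL-Probability.Probability"
begin

definition sym_mat :: "real^'n^'n \<Rightarrow> bool" where
  "sym_mat A \<longleftrightarrow> transpose A = A"

definition pos_def :: "real^'n^'n \<Rightarrow> bool" where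
  "pos_def A \<longleftrightarrow> sym_mat A \<and> (\<forall>x. x \<noteq> 0 \<longrightarrow> x \<bullet> (A *v x) > 0)"

definition mat_sqrt :: "real^'n^'n \<Rightarrow> real^'n^'n" where
  "mat_sqrt A = (THE S. pos_def S \<and> S ** S = A)"

definition wnorm :: "real^'n^'n \<Rightarrow> real^'n \<Rightarrow> real" where
  "wnorm M u = sqrt (u \<bullet> (M *v u))"

definition negpart :: "real \<Rightarrow> real" where
  "negpart x = min x 0"

text \<open>Maximiser over the ellipsoid; \<open>x0\<close> is the (arbitrary) value chosen at 0.\<close>
definition xstar :: "real^'n^'n \<Rightarrow> real^'n \<Rightarrow> real^'n \<Rightarrow> real^'n" where
  "xstar A x0 u = (if u = 0 then x0 else (1 / wnorm A u) *\<^sub>R (A *v u))"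

definition outer :: "real^'n \<Rightarrow> real^'n^'n" where
  "outer x = (\<chi> i j. x $ i * x $ j)"

text \<open>Least squares estimate \<open>(X^T X)^{-1} X^T Y\<close> for actions \<open>x 0..x (N-1)\<close>
  (rows of X) and responses \<open>y\<close>: \<open>X^T X = \<Sum>_t x_t x_t^T\<close>, \<open>X^T Y = \<Sum>_t y_t x_t\<close>.\<close>
definition ols :: "nat \<Rightarrow> (nat \<Rightarrow> real^'n) \<Rightarrow> (nat \<Rightarrow> real) \<Rightarrow> real^'n" where
  "ols N x y = matrix_inv (\<Sum>t<N. outer (x t)) *v (\<Sum>t<N. y t *\<^sub>R x t)"

definition subgaussian :: "'a measure \<Rightarrow> real \<Rightarrow> ('a \<Rightarrow> real) \<Rightarrow> bool" where
  "subgaussian M s2 Z \<longleftrightarrow>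
     (\<forall>l::real. integrable M (\<lambda>w. exp (l * Z w)) \<and>
        (\<integral>w. exp (l * Z w) \<partial>M) \<le> exp (l\<^sup>2 * s2 / 2))"

end

theory Submission
  imports Defs
begin


lemma sym_dot:
  assumes "sym_mat A"
  shows "x \<bullet> (A *v y) = (A *v x) \<bullet> y"
proof -
  have "x \<bullet> (A *v y) = (x v* A) \<bullet> y" by (simp add: dot_lmul_matrix)
  also have "x v* A = transpose A *v x" by simp
  also have "transpose A *v x = A *v x" using assms by (simp add: sym_mat_def)
  finally show ?thesis .
qed

lemma quad_max_orth:
  fixes A :: "real^'n^'n"
  assumes sym: "sym_mat A"
    and max: "\<And>y. y \<in> V \<Longrightarrow> y \<bullet> (A *v y) \<le> l * (y \<bullet> y)"
    and sub: "subspace V" and v: "v \<in> V" "v \<bullet> v = 1" "v \<bullet> (A *v v) = l"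
    and w: "w \<in> V" "w \<bullet> v = 0"
  shows "w \<bullet> (A *v v) = 0"
proof (rule ccontr)
  assume a0: "w \<bullet> (A *v v) \<noteq> 0"
  define a where "a = w \<bullet> (A *v v)"
  define K where "K = l * (w \<bullet> w) - w \<bullet> (A *v w)"
  have key: "2 * t * a \<le> t^2 * K" for t
  proof -
    have "v + t *\<^sub>R w \<in> V" using sub v w by (simp add: subspace_add subspace_mul)
    from max[OF this] have 1: "(v + t *\<^sub>R w) \<bullet> (A *v (v + t *\<^sub>R w)) \<le> l * ((v + t *\<^sub>R w) \<bullet> (v + t *\<^sub>R w))" .
    have 2: "(v + t *\<^sub>R w) \<bullet> (A *v (v + t *\<^sub>R w)) = l + 2 * t * a + t^2 * (w \<bullet> (A *v w))"
      using sym_dot[OF sym, of v w] v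
      by (simp add: matrix_vector_right_distrib inner_add_left inner_add_right a_def power2_eq_square
          algebra_simps inner_commute)
    have 3: "(v + t *\<^sub>R w) \<bullet> (v + t *\<^sub>R w) = 1 + t^2 * (w \<bullet> w)"
      using v w by (simp add: inner_add_left inner_add_right power2_eq_square inner_commute)
    from 1 have "l + 2 * t * a + t^2 * (w \<bullet> (A *v w)) \<le> l * (1 + t^2 * (w \<bullet> w))"
      unfolding 2 3 .
    then show ?thesis by (simp add: K_def algebra_simps)
  qed
  define s where "s = 1 / (\<bar>K\<bar> + 1)"
  have s: "s > 0" "s * K < 2" unfolding s_def by (auto simp: field_simps abs_if)
  have "2 * (a * s) * a \<le> (a * s)\<^sup>2 * K" by (rule key)
  hence "(a*a) * s * 2 \<le> (a*a) * s * (s * K)" by (simp add: power2_eq_square algebra_simps)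
  moreover have "(a*a) * s > 0" using a0 s unfolding a_def[symmetric] by (auto simp add: zero_less_mult_iff)
  ultimately have "2 \<le> s * K" using mult_le_cancel_left_pos by blast
  with s show False by simp
qed



lemma spectral_sub:
  fixes A :: "real^'n^'n"
  assumes sym: "sym_mat A"
  shows "subspace V \<Longrightarrow> (\<forall>x\<in>V. A *v x \<in> V) \<Longrightarrow>
    \<exists>B. B \<subseteq> V \<and> pairwise orthogonal B \<and> (\<forall>b\<in>B. norm b = 1 \<and> (\<exists>l. A *v b = l *\<^sub>R b)) \<and> V \<subseteq> span B"
proof (induction "dim V" arbitrary: V rule: less_induct)
  case less
  note sub = less.prems(1) and inv = less.prems(2)
  show ?case
  proof (cases "V \<subseteq> {0}")
    case True
    then show ?thesis by (intro exI[of _ "{}"]) auto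
  next
    case False
    then obtain x0 where x0: "x0 \<in> V" "x0 \<noteq> 0" by auto
    define S where "S = V \<inter> sphere 0 1"
    have "compact S" unfolding S_def
      by (metis compact_Int_closed compact_sphere closed_subspace sub Int_commute)
    moreover have "S \<noteq> {}"
    proof -
      have "(1 / norm x0) *\<^sub>R x0 \<in> S" using x0 sub
        by (simp add: S_def subspace_mul)
      then show ?thesis by auto
    qed
    moreover have "continuous_on S (\<lambda>y. y \<bullet> (A *v y))"
      by (intro continuous_intros)
    ultimately obtain v where v: "v \<in> S" and vmax: "\<And>y. y \<in> S \<Longrightarrow> y \<bullet> (A *v y) \<le> v \<bullet> (A *v v)"
      using continuous_attains_sup[of S "\<lambda>y. y \<bullet> (A *v y)"] by blast
    define l where "l = v \<bullet> (A *v v)"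
    have vV: "v \<in> V" and vn: "norm v = 1" using v by (auto simp: S_def)
    have vv: "v \<bullet> v = 1" using vn by (simp add: norm_eq_1)
    have maxV: "y \<bullet> (A *v y) \<le> l * (y \<bullet> y)" if y: "y \<in> V" for y
    proof (cases "y = 0")
      case True then show ?thesis by simp
    next
      case False
      have "(1 / norm y) *\<^sub>R y \<in> S" using y False sub by (simp add: S_def subspace_mul)
      from vmax[OF this] have "(1 / norm y)^2 * (y \<bullet> (A *v y)) \<le> l"
        by (simp add: l_def matrix_vector_mult_scaleR power2_eq_square algebra_simps)
      then have "y \<bullet> (A *v y) \<le> l * (norm y)^2" using False
        by (simp add: field_simps)
      then show ?thesis by (simp add: power2_norm_eq_inner)
    qed
    have AvV: "A *v v \<in> V" using inv vV by blast
    define r where "r = A *v v - l *\<^sub>R v"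
    have rV: "r \<in> V" unfolding r_def using AvV vV sub by (simp add: subspace_diff subspace_mul)
    have rv: "r \<bullet> v = 0" unfolding r_def using vv
      by (simp add: inner_diff_left inner_diff_right l_def inner_commute)
    have rAv: "r \<bullet> (A *v v) = 0"
      by (rule quad_max_orth[OF sym maxV sub vV vv l_def[symmetric] rV rv])
    have "r \<bullet> r = r \<bullet> (A *v v) - l * (r \<bullet> v)"
      unfolding r_def by (simp add: inner_diff_right)
    then have "r \<bullet> r = 0" using rAv rv by simp
    then have "r = 0" by simp
    then have eig: "A *v v = l *\<^sub>R v" by (simp add: r_def)
    define V' where "V' = {w\<in>V. w \<bullet> v = 0}"
    have subV': "subspace V'" using sub unfolding V'_def subspace_def
      by (auto simp: inner_add_left)
    have invV': "\<forall>x\<in>V'. A *v x \<in> V'"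
    proof
      fix w assume w: "w \<in> V'"
      then have "A *v w \<in> V" using inv by (auto simp: V'_def)
      moreover have "(A *v w) \<bullet> v = 0"
        using sym_dot[OF sym, of w v] w eig by (simp add: V'_def)
      ultimately show "A *v w \<in> V'" by (simp add: V'_def)
    qed
    have "v \<notin> V'" using vv by (simp add: V'_def)
    then have "V' \<subset> V" using vV unfolding V'_def by blast
    then have "dim V' < dim V"
      using dim_psubset[of V' V] subV' sub span_eq_iff by metis
    from less.hyps[OF this subV' invV'] obtain B' where B':
      "B' \<subseteq> V'" "pairwise orthogonal B'" "\<forall>b\<in>B'. norm b = 1 \<and> (\<exists>l. A *v b = l *\<^sub>R b)" "V' \<subseteq> span B'"
      by blast
    show ?thesis
    proof (intro exI[of _ "insert v B'"] conjI)
      show "insert v B' \<subseteq> V" using B'(1) vV by (auto simp: V'_def)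
      show "pairwise orthogonal (insert v B')"
        using B'(1,2) by (intro pairwise_orthogonal_insert) (auto simp: V'_def orthogonal_def inner_commute)
      show "\<forall>b\<in>insert v B'. norm b = 1 \<and> (\<exists>l. A *v b = l *\<^sub>R b)"
        using B'(3) vn eig by auto
      show "V \<subseteq> span (insert v B')"
      proof
        fix x assume x: "x \<in> V"
        have "x - (x \<bullet> v) *\<^sub>R v \<in> V'" using x vV sub vv
          by (simp add: V'_def subspace_diff subspace_mul inner_diff_left)
        then have "x - (x \<bullet> v) *\<^sub>R v \<in> span (insert v B')"
          using B'(4) span_mono[of B' "insert v B'"] by blast
        moreover have "(x \<bullet> v) *\<^sub>R v \<in> span (insert v B')"
          by (simp add: span_base span_mul)
        ultimately have "x - (x \<bullet> v) *\<^sub>R v + (x \<bullet> v) *\<^sub>R v \<in> span (insert v B')"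
          by (rule span_add)
        then show "x \<in> span (insert v B')" by simp
      qed
    qed
  qed
qed


lemma entry_dot: "axis i 1 \<bullet> ((X::real^'n^'n) *v axis j 1) = X $ i $ j"
  by (simp add: inner_axis' matrix_vector_mult_basis column_def)

lemma sym_matI:
  fixes S :: "real^'n^'n"
  assumes "\<And>x y. y \<bullet> (S *v x) = x \<bullet> (S *v y)"
  shows "sym_mat S"
proof -
  have "S $ j $ i = S $ i $ j" for i j using assms[of "axis i 1" "axis j 1"] by (simp add: entry_dot)
  then show ?thesis unfolding sym_mat_def vec_eq_iff transpose_def by simp
qed

lemma inv_eq:
  fixes A B :: "real^'n^'n"
  assumes "A ** B = mat 1"
  shows "matrix_inv A = B"
proof -
  have BA: "B ** A = mat 1" using assms matrix_left_right_inverse by blast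
  have "\<exists>A'. A ** A' = mat 1 \<and> A' ** A = mat 1" using assms BA by blast
  then have "A ** matrix_inv A = mat 1 \<and> matrix_inv A ** A = mat 1"
    unfolding matrix_inv_def by (rule someI_ex)
  then have i: "matrix_inv A ** A = mat 1" by blast
  have "B = (matrix_inv A ** A) ** B" by (simp add: i)
  also have "\<dots> = matrix_inv A ** (A ** B)" by (simp add: matrix_mul_assoc)
  also have "\<dots> = matrix_inv A" by (simp add: assms)
  finally show ?thesis by simp
qed

lemma orth_expand:
  fixes B :: "(real^'n) set"
  assumes fin: "finite B" and po: "pairwise orthogonal B" and nb: "\<forall>b\<in>B. norm b = 1"
    and x: "x \<in> span B"
  shows "x = (\<Sum>b\<in>B. (b \<bullet> x) *\<^sub>R b)"
proof -
  have orth: "b \<bullet> c = (if b = c then 1 else 0)" if "b \<in> B" "c \<in> B" for b c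
    using po nb that by (auto simp: pairwise_def orthogonal_def norm_eq_1)
  define y where "y = x - (\<Sum>b\<in>B. (b \<bullet> x) *\<^sub>R b)"
  have yspan: "y \<in> span B" unfolding y_def
    by (intro span_diff x span_sum span_mul span_base)
  have "orthogonal y c" if c: "c \<in> B" for c
  proof -
    have "(\<Sum>b\<in>B. (b \<bullet> x) *\<^sub>R b) \<bullet> c = (\<Sum>b\<in>B. (b \<bullet> x) * (b \<bullet> c))"
      by (simp add: inner_sum_left)
    also have "\<dots> = (\<Sum>b\<in>B. if b = c then b \<bullet> x else 0)"
      by (intro sum.cong) (auto simp: orth c)
    also have "\<dots> = c \<bullet> x" using c fin by simp
    finally show ?thesis unfolding y_def orthogonal_def by (simp add: inner_diff_left inner_diff_right inner_commute)
  qed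
  then have "orthogonal y y" using orthogonal_to_span[OF yspan] by blast
  then have "y = 0" by (simp add: orthogonal_def)
  then show ?thesis by (simp add: y_def)
qed



lemma sqrt_exists:
  fixes A :: "real^'n^'n"
  assumes pd: "pos_def A"
  shows "\<exists>S. pos_def S \<and> S ** S = A"
proof -
  have sym: "sym_mat A" using pd by (simp add: pos_def_def)
  obtain B where B: "pairwise orthogonal B" "\<forall>b\<in>B. norm b = 1 \<and> (\<exists>l. A *v b = l *\<^sub>R b)" "UNIV \<subseteq> span B"
    using spectral_sub[OF sym subspace_UNIV] by blast
  have fin: "finite B" using B(1) pairwise_orthogonal_imp_finite by blast
  have nb: "\<forall>b\<in>B. norm b = 1" using B(2) by auto
  have orth: "b \<bullet> c = (if b = c then 1 else 0)" if "b \<in> B" "c \<in> B" for b c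
  proof (cases "b = c")
    case True then show ?thesis using nb that by (simp add: norm_eq_1)
  next
    case False then show ?thesis using B(1) that unfolding pairwise_def orthogonal_def by simp
  qed
  define lam where "lam b = b \<bullet> (A *v b)" for b
  have eig: "A *v b = lam b *\<^sub>R b" if "b \<in> B" for b
  proof -
    have "\<exists>l. A *v b = l *\<^sub>R b" using B(2) that by simp
    then obtain l where l: "A *v b = l *\<^sub>R b" by (elim exE)
    have "lam b = l" using orth[OF that that] by (simp add: lam_def l)
    then show ?thesis using l by simp
  qed
  have lpos: "lam b > 0" if "b \<in> B" for b
  proof -
    have "b \<noteq> 0" using nb that by auto
    then show ?thesis using pd by (simp add: pos_def_def lam_def)
  qed
  have exp: "x = (\<Sum>b\<in>B. (b \<bullet> x) *\<^sub>R b)" for x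
    using orth_expand[OF fin B(1) nb] B(3) by blast
  define f where "f x = (\<Sum>b\<in>B. (sqrt (lam b) * (b \<bullet> x)) *\<^sub>R b)" for x
  have lin: "linear f" unfolding f_def
    by (rule linearI) (simp_all add: inner_add_right distrib_left scaleR_add_left sum.distrib scaleR_sum_right mult.left_commute)
  define S where "S = matrix f"
  have Sv: "S *v x = f x" for x
  proof -
    have "(\<lambda>x. matrix f *v x) = f" by (rule matrix_vector_mul(2)[OF lin])
    from fun_cong[OF this, of x] show ?thesis unfolding S_def .
  qed
  have dotf: "c \<bullet> f x = sqrt (lam c) * (c \<bullet> x)" if c: "c \<in> B" for c x
  proof -
    have "c \<bullet> f x = (\<Sum>b\<in>B. sqrt (lam b) * (b \<bullet> x) * (c \<bullet> b))"
      by (simp add: f_def inner_sum_right)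
    also have "\<dots> = (\<Sum>b\<in>B. if b = c then sqrt (lam c) * (c \<bullet> x) else 0)"
      by (intro sum.cong) (auto simp: orth c)
    also have "\<dots> = sqrt (lam c) * (c \<bullet> x)" using c fin by simp
    finally show ?thesis .
  qed
  have "(S ** S) *v x = A *v x" for x
  proof -
    have "(S ** S) *v x = f (f x)" by (simp add: Sv matrix_vector_mul_assoc[symmetric])
    also have "\<dots> = (\<Sum>b\<in>B. (lam b * (b \<bullet> x)) *\<^sub>R b)"
      unfolding f_def[of "f x"] using lpos
      by (intro sum.cong) (auto simp: dotf less_imp_le)
    also have "\<dots> = A *v (\<Sum>b\<in>B. (b \<bullet> x) *\<^sub>R b)"
      by (simp add: linear_sum[OF matrix_vector_mul_linear] o_def matrix_vector_mult_scaleR eig mult.commute)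
    also have "\<dots> = A *v x" by (simp only: exp[of x, symmetric])
    finally show ?thesis .
  qed
  then have SS: "S ** S = A" by (simp add: matrix_eq)
  have symS: "sym_mat S"
  proof (rule sym_matI)
    fix x y
    show "y \<bullet> (S *v x) = x \<bullet> (S *v y)"
      by (simp add: Sv f_def inner_sum_right mult.commute mult.left_commute inner_commute)
  qed
  have "0 < x \<bullet> (S *v x)" if x: "x \<noteq> 0" for x
  proof -
    have "\<exists>b\<in>B. b \<bullet> x \<noteq> 0"
    proof (rule ccontr)
      assume "\<not> ?thesis"
      then have "(\<Sum>b\<in>B. (b \<bullet> x) *\<^sub>R b) = 0" by simp
      then show False using exp[of x] x by metis
    qed
    then obtain c where c: "c \<in> B" "c \<bullet> x \<noteq> 0" by blast
    have "x \<bullet> (S *v x) = (\<Sum>b\<in>B. sqrt (lam b) * (b \<bullet> x)^2)"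
      by (simp add: Sv f_def inner_sum_right inner_commute power2_eq_square mult.assoc)
    also have "\<dots> > 0"
    proof (rule sum_pos2[OF fin c(1)])
      show "0 < sqrt (lam c) * (c \<bullet> x)^2" using c lpos by simp
      show "0 \<le> sqrt (lam b) * (b \<bullet> x)^2" if "b \<in> B" for b using lpos[OF that] by simp
    qed
    finally show ?thesis .
  qed
  then have "pos_def S" using symS by (simp add: pos_def_def)
  then show ?thesis using SS by blast
qed


lemma mm_diff_l: "(A::real^'n^'n) ** (B - C) = A ** B - A ** C"
  by (simp add: matrix_matrix_mult_def vec_eq_iff sum_subtractf algebra_simps)
lemma mm_diff_r: "((B::real^'n^'n) - C) ** A = B ** A - C ** A"
  by (simp add: matrix_matrix_mult_def vec_eq_iff sum_subtractf algebra_simps)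
lemma mm_add_r: "((B::real^'n^'n) + C) ** A = B ** A + C ** A"
  by (simp add: matrix_matrix_mult_def vec_eq_iff sum.distrib algebra_simps)
lemma mm_zero_r: "(A::real^'n^'n) ** 0 = 0"
  by (simp add: matrix_matrix_mult_def vec_eq_iff)

lemma trace_quad:
  fixes D M :: "real^'n^'n"
  assumes "sym_mat D"
  shows "trace (D ** (M ** D)) = (\<Sum>i\<in>UNIV. (D *v axis i 1) \<bullet> (M *v (D *v axis i 1)))"
proof -
  have "(D ** (M ** D)) $ i $ i = (D *v axis i 1) \<bullet> (M *v (D *v axis i 1))" for i
  proof -
    have "(D ** (M ** D)) $ i $ i = axis i 1 \<bullet> ((D ** (M ** D)) *v axis i 1)" by (simp add: entry_dot)
    also have "\<dots> = axis i 1 \<bullet> (D *v (M *v (D *v axis i 1)))" by (simp add: matrix_vector_mul_assoc)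
    also have "\<dots> = (D *v axis i 1) \<bullet> (M *v (D *v axis i 1))" by (rule sym_dot[OF assms])
    finally show ?thesis .
  qed
  then show ?thesis by (simp add: trace_def)
qed

lemma sqrt_unique:
  fixes S T :: "real^'n^'n"
  assumes S: "pos_def S" and T: "pos_def T" and eq: "S ** S = T ** T"
  shows "S = T"
proof -
  define D where "D = S - T"
  have symS: "transpose S = S" and symT: "transpose T = T" using S T by (auto simp: pos_def_def sym_mat_def)
  have symD: "sym_mat D" unfolding sym_mat_def D_def using symS symT by (simp add: transpose_def vec_eq_iff)
  have "S ** D + D ** T = 0"
    unfolding D_def using eq by (simp add: mm_diff_l mm_diff_r matrix_mul_assoc)
  then have "D ** (S ** D) + D ** (D ** T) = 0"
    by (metis matrix_add_ldistrib mm_zero_r)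
  then have "trace (D ** (S ** D)) + trace (D ** (D ** T)) = 0"
    by (metis trace_add trace_0 mat_0)
  moreover have "trace (D ** (D ** T)) = trace (D ** (T ** D))"
    by (metis matrix_mul_assoc trace_mul_sym)
  ultimately have "(\<Sum>i\<in>UNIV. (D *v axis i 1) \<bullet> (S *v (D *v axis i 1))) + (\<Sum>i\<in>UNIV. (D *v axis i 1) \<bullet> (T *v (D *v axis i 1))) = 0"
    by (simp add: trace_quad[OF symD])
  then have "(\<Sum>i\<in>UNIV. (D *v axis i 1) \<bullet> (S *v (D *v axis i 1)) + (D *v axis i 1) \<bullet> (T *v (D *v axis i 1))) = 0"
    by (simp add: sum.distrib)
  moreover have nn: "\<forall>i\<in>UNIV. 0 \<le> (D *v axis i 1) \<bullet> (S *v (D *v axis i 1)) + (D *v axis i 1) \<bullet> (T *v (D *v axis i 1))"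
  proof
    fix i
    show "0 \<le> (D *v axis i 1) \<bullet> (S *v (D *v axis i 1)) + (D *v axis i 1) \<bullet> (T *v (D *v axis i 1))"
      using S T unfolding pos_def_def
      by (cases "D *v axis i 1 = 0") (auto intro: add_nonneg_nonneg less_imp_le)
  qed
  ultimately have z: "\<forall>i\<in>UNIV. (D *v axis i 1) \<bullet> (S *v (D *v axis i 1)) + (D *v axis i 1) \<bullet> (T *v (D *v axis i 1)) = 0"
    using sum_nonneg_eq_0_iff[OF finite] by (metis (no_types, lifting))
  have "D *v axis i 1 = 0" for i
  proof (rule ccontr)
    assume "D *v axis i 1 \<noteq> 0"
    then have "0 < (D *v axis i 1) \<bullet> (S *v (D *v axis i 1)) + (D *v axis i 1) \<bullet> (T *v (D *v axis i 1))"
      using S T unfolding pos_def_def by (simp add: add_pos_pos)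
    with z show False by simp
  qed
  then have "D = 0"
    by (metis entry_dot inner_zero_right vec_eq_iff zero_index)
  then show ?thesis unfolding D_def by simp
qed

lemma mat_sqrt:
  fixes A :: "real^'n^'n"
  assumes "pos_def A"
  shows "pos_def (mat_sqrt A) \<and> mat_sqrt A ** mat_sqrt A = A"
proof -
  obtain S where S: "pos_def S" "S ** S = A" using sqrt_exists[OF assms] by blast
  have "mat_sqrt A = S" unfolding mat_sqrt_def
    by (rule the_equality) (use S sqrt_unique in auto)
  then show ?thesis using S by simp
qed

lemma pos_def_inj:
  fixes S :: "real^'n^'n"
  assumes "pos_def S" "S *v x = 0" shows "x = 0"
  using assms unfolding pos_def_def by (metis inner_zero_right less_irrefl)

lemma pos_def_inv:
  fixes S :: "real^'n^'n"
  assumes "pos_def S"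
  shows "S ** matrix_inv S = mat 1" "matrix_inv S ** S = mat 1"
proof -
  have "\<exists>B. B ** S = mat 1"
    using matrix_left_invertible_ker pos_def_inj[OF assms] by blast
  then obtain B where B: "B ** S = mat 1" by blast
  then have "S ** B = mat 1" using matrix_left_right_inverse by blast
  then have "matrix_inv S = B" by (rule inv_eq)
  then show "S ** matrix_inv S = mat 1" "matrix_inv S ** S = mat 1" using B \<open>S ** B = mat 1\<close> by auto
qed



lemma cyc_sum_nat:
  fixes g :: "nat \<Rightarrow> 'b::comm_monoid_add"
  assumes "d > 0"
  shows "(\<Sum>t<q*d. g (t mod d)) = (\<Sum>m<q. \<Sum>k<d. g k)"
proof -
  have "(\<Sum>t<q*d. g (t mod d)) = (\<Sum>m<q. \<Sum>t\<in>{m*d..<m*d+d}. g (t mod d))"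
    by (rule sum.nat_group[symmetric])
  also have "\<dots> = (\<Sum>m<q. \<Sum>k<d. g k)"
  proof (rule sum.cong[OF refl])
    fix m
    have "(\<Sum>t\<in>{m*d..<m*d+d}. g (t mod d)) = (\<Sum>t\<in>{0+m*d..<d+m*d}. g (t mod d))"
      by (simp add: add.commute)
    also have "\<dots> = (\<Sum>k\<in>{0..<d}. g ((k + m*d) mod d))"
      by (rule sum.shift_bounds_nat_ivl)
    also have "\<dots> = (\<Sum>k<d. g k)"
      by (intro sum.cong) auto
    finally show "(\<Sum>t\<in>{m*d..<m*d+d}. g (t mod d)) = (\<Sum>k<d. g k)" .
  qed
  finally show ?thesis .
qed

lemma cyc_sum:
  fixes f :: "'n::finite \<Rightarrow> 'b::comm_monoid_add"
  assumes bij: "bij_betw enum {..<CARD('n)} UNIV"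
  shows "(\<Sum>t<q*CARD('n). f (enum (t mod CARD('n)))) = (\<Sum>m<q. \<Sum>i\<in>UNIV. f i)"
proof -
  have "(\<Sum>t<q*CARD('n). f (enum (t mod CARD('n)))) = (\<Sum>m<q. \<Sum>k<CARD('n). f (enum k))"
    by (rule cyc_sum_nat) simp
  also have "\<dots> = (\<Sum>m<q. \<Sum>i\<in>UNIV. f i)"
    using sum.reindex_bij_betw[OF bij, of f] by simp
  finally show ?thesis .
qed

lemma msum_mv: "(sum f T :: real^'n^'n) *v v = (\<Sum>t\<in>T. f t *v v)"
  by (simp add: matrix_vector_mult_def vec_eq_iff sum_component sum_distrib_right sum.swap[of _ T])

lemma outer_mv: "outer x *v v = (x \<bullet> v) *\<^sub>R x"
  by (simp add: outer_def matrix_vector_mult_def vec_eq_iff inner_vec_def sum_distrib_left mult.commute mult.left_commute)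

lemma axis_expand: "(\<Sum>i\<in>UNIV. (axis i 1 \<bullet> w) *\<^sub>R axis i (1::real)) = (w::real^'n)"
  by (simp add: inner_axis') (simp add: vec_eq_iff sum_component axis_def mult.commute[of _ "if _ then _ else _"] if_distrib cong: if_cong)


lemma ols_formula:
  fixes A :: "real^'n^'n" and \<theta> :: "real^'n" and enum :: "nat \<Rightarrow> 'n" and zz :: "nat \<Rightarrow> real"
  assumes pd: "pos_def A" and Ne: "Ne = q * CARD('n)" and q: "q > 0"
    and bij: "bij_betw enum {..<CARD('n)} UNIV"
  shows "mat_sqrt A *v ols Ne (\<lambda>t. mat_sqrt A *v axis (enum (t mod CARD('n))) 1)
            (\<lambda>t. (mat_sqrt A *v axis (enum (t mod CARD('n))) 1) \<bullet> \<theta> + zz t)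
         = mat_sqrt A *v \<theta> + (1 / real q) *\<^sub>R (\<Sum>t<Ne. zz t *\<^sub>R axis (enum (t mod CARD('n))) 1)"
proof -
  define S where "S = mat_sqrt A"
  have S: "pos_def S" "S ** S = A" using mat_sqrt[OF pd] by (auto simp: S_def)
  have symS: "sym_mat S" using S by (simp add: pos_def_def)
  define Si where "Si = matrix_inv S"
  have Si: "S ** Si = mat 1" "Si ** S = mat 1" using pos_def_inv[OF S(1)] by (auto simp: Si_def)
  define e where "e t = axis (enum (t mod CARD('n))) (1::real)" for t
  define x where "x t = S *v e t" for t
  define \<zeta> where "\<zeta> = (\<Sum>t<Ne. zz t *\<^sub>R e t)"
  define G where "G = (\<Sum>t<Ne. outer (x t))"
  have Gv: "G *v v = real q *\<^sub>R (A *v v)" for v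
  proof -
    have "G *v v = (\<Sum>t<Ne. (x t \<bullet> v) *\<^sub>R x t)"
      by (simp add: G_def msum_mv outer_mv)
    also have "\<dots> = S *v (\<Sum>t<Ne. (e t \<bullet> (S *v v)) *\<^sub>R e t)"
      by (simp add: x_def linear_sum[OF matrix_vector_mul_linear] o_def matrix_vector_mult_scaleR
          sym_dot[OF symS])
    also have "(\<Sum>t<Ne. (e t \<bullet> (S *v v)) *\<^sub>R e t) = (\<Sum>m<q. \<Sum>i\<in>UNIV. (axis i 1 \<bullet> (S *v v)) *\<^sub>R axis i (1::real))"
      unfolding Ne e_def by (rule cyc_sum[OF bij, of "\<lambda>i. (axis i 1 \<bullet> (S *v v)) *\<^sub>R axis i 1"])
    also have "\<dots> = real q *\<^sub>R (S *v v)" by (simp only: axis_expand sum_constant_scaleR) simp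
    finally show ?thesis by (simp add: matrix_vector_mult_scaleR matrix_vector_mul_assoc S(2))
  qed
  then have G: "G = real q *\<^sub>R A" by (simp add: matrix_eq scaleR_matrix_vector_assoc)
  have Ginv: "matrix_inv G = (1 / real q) *\<^sub>R (Si ** Si)"
  proof (rule inv_eq)
    have "G ** ((1 / real q) *\<^sub>R (Si ** Si)) = ((1 / real q) * real q) *\<^sub>R (((S ** S) ** Si) ** Si)"
      by (simp add: G S(2) matrix_scalar_ac scalar_matrix_assoc[symmetric] matrix_mul_assoc)
    also have "\<dots> = mat 1" using q by (simp add: Si matrix_mul_assoc[symmetric])
    finally show "G ** ((1 / real q) *\<^sub>R (Si ** Si)) = mat 1" .
  qed
  have rhs: "(\<Sum>t<Ne. ((x t \<bullet> \<theta>) + zz t) *\<^sub>R x t) = G *v \<theta> + S *v \<zeta>"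
    by (simp add: scaleR_add_left sum.distrib G_def msum_mv outer_mv \<zeta>_def x_def
        linear_sum[OF matrix_vector_mul_linear] o_def matrix_vector_mult_scaleR)
  have "S *v ols Ne x (\<lambda>t. x t \<bullet> \<theta> + zz t) = S *v (matrix_inv G *v (G *v \<theta> + S *v \<zeta>))"
    unfolding ols_def G_def[symmetric] rhs ..
  also have "\<dots> = S *v \<theta> + (1 / real q) *\<^sub>R \<zeta>"
  proof -
    have "matrix_inv G ** G = mat 1" using Ginv G q
      by (simp add: matrix_scalar_ac scalar_matrix_assoc[symmetric] matrix_mul_assoc[symmetric] S(2))
         (simp add: matrix_mul_assoc Si S(2)[symmetric])
    then have 1: "matrix_inv G *v (G *v \<theta>) = \<theta>" by (simp add: matrix_vector_mul_assoc)
    have "S *v (matrix_inv G *v (S *v \<zeta>)) = (1 / real q) *\<^sub>R (((S ** Si) ** (Si ** S)) *v \<zeta>)"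
      by (simp add: Ginv matrix_vector_mul_assoc matrix_mul_assoc scaleR_matrix_vector_assoc[symmetric]
          matrix_vector_mult_scaleR matrix_scalar_ac scalar_matrix_assoc[symmetric])
    also have "\<dots> = (1 / real q) *\<^sub>R \<zeta>" by (simp add: Si)
    finally show ?thesis using 1 by (simp add: matrix_vector_right_distrib)
  qed
  finally show ?thesis by (simp add: S_def x_def[abs_def] e_def \<zeta>_def)
qed



lemma regret_abs:
  fixes u v :: "real^'n"
  assumes c: "\<bar>c\<bar> \<le> norm u"
  shows "\<bar>norm u - (if v = 0 then c else (u \<bullet> v) / norm v)\<bar> \<le> 2 * norm u"
proof -
  have "\<bar>(if v = 0 then c else (u \<bullet> v) / norm v)\<bar> \<le> norm u"
  proof (cases "v = 0")
    case True then show ?thesis using c by simp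
  next
    case False
    have "\<bar>u \<bullet> v\<bar> \<le> norm u * norm v" by (rule Cauchy_Schwarz_ineq2)
    then show ?thesis using False by (simp add: abs_div divide_le_eq)
  qed
  then show ?thesis by linarith
qed

lemma regret_small:
  fixes u \<xi> :: "real^'n"
  assumes u: "u \<noteq> 0" and small: "norm \<xi> < norm u"
  shows "u + \<xi> \<noteq> 0 \<and> norm u - (u \<bullet> (u + \<xi>)) / norm (u + \<xi>) \<le> (norm \<xi>)\<^sup>2 / norm u"
proof -
  define v where "v = u + \<xi>"
  define r where "r = norm u"
  define m where "m = norm v"
  define p where "p = u \<bullet> v"
  have r: "r > 0" using u by (simp add: r_def)
  have xi: "(norm \<xi>)\<^sup>2 = m^2 - 2 * p + r^2"
  proof -
    have "\<xi> = v - u" by (simp add: v_def)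
    then have "(norm \<xi>)\<^sup>2 = (v - u) \<bullet> (v - u)" by (simp add: power2_norm_eq_inner)
    also have "\<dots> = v \<bullet> v - 2 * (u \<bullet> v) + u \<bullet> u" by (simp add: inner_diff_left inner_diff_right inner_commute)
    finally show ?thesis by (simp add: m_def p_def r_def power2_norm_eq_inner)
  qed
  have "(norm \<xi>)\<^sup>2 < r^2" using small r by (simp add: r_def power_strict_mono)
  then have p: "2 * p > m^2" using xi by simp
  then have ppos: "p > 0" by (smt (verit) zero_le_power2)
  have vnz: "v \<noteq> 0" using ppos by (auto simp: p_def)
  then have m: "m > 0" by (simp add: m_def)
  have cs: "p \<le> r * m" unfolding p_def r_def m_def by (rule norm_cauchy_schwarz)
  have key: "p * (2 * m - r) \<le> m^3"
  proof (cases "2 * m - r \<le> 0")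
    case True then show ?thesis using ppos m by (smt (verit) mult_nonneg_nonpos zero_less_power)
  next
    case False
    then have "p * (2 * m - r) \<le> r * m * (2 * m - r)" using cs by (simp add: mult_right_mono)
    also have "\<dots> \<le> m^3"
    proof -
      have "0 \<le> m * (m - r)^2" using m by simp
      then show ?thesis by (simp add: power2_eq_square power3_eq_cube algebra_simps)
    qed
    finally show ?thesis .
  qed
  have "r - p / m \<le> (m^2 - 2 * p + r^2) / r"
  proof -
    have "(r - p / m) * (r * m) = r^2 * m - p * r" using m by (simp add: field_simps power2_eq_square)
    also have "\<dots> \<le> (m^2 - 2 * p + r^2) * m" using key by (simp add: power2_eq_square power3_eq_cube algebra_simps)
    also have "\<dots> = ((m^2 - 2 * p + r^2) / r) * (r * m)" using r by (simp add: field_simps)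
    finally have "(r - p / m) * r \<le> m\<^sup>2 - 2 * p + r\<^sup>2" using r m by (simp add: mult_le_cancel_right_pos)
    then show ?thesis using r by (simp add: pos_le_divide_eq)
  qed
  then show ?thesis using vnz xi by (simp add: v_def r_def m_def p_def)
qed

lemma regret_bound:
  fixes u \<xi> :: "real^'n"
  assumes u: "u \<noteq> 0" and c: "\<bar>c\<bar> \<le> norm u"
  shows "norm u - (if u + \<xi> = 0 then c else (u \<bullet> (u + \<xi>)) / norm (u + \<xi>))
      \<le> (norm \<xi>)\<^sup>2 / norm u + (if norm u \<le> norm \<xi> then 2 * norm u else 0)"
proof (cases "norm \<xi> < norm u")
  case True
  then show ?thesis using regret_small[OF u True] by simp
next
  case False
  have "norm u - (if u + \<xi> = 0 then c else (u \<bullet> (u + \<xi>)) / norm (u + \<xi>)) \<le> 2 * norm u"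
    using regret_abs[OF c, of "u + \<xi>"] by linarith
  moreover have "0 \<le> (norm \<xi>)\<^sup>2 / norm u" by simp
  moreover have "(if norm u \<le> norm \<xi> then 2 * norm u else 0) = 2 * norm u" using False by simp
  ultimately show ?thesis by linarith
qed


lemma wnorm_sqrt:
  fixes A :: "real^'n^'n"
  assumes pd: "pos_def A"
  shows "wnorm A q = norm (mat_sqrt A *v q)"
proof -
  define S where "S = mat_sqrt A"
  have S: "pos_def S" "S ** S = A" using mat_sqrt[OF pd] by (auto simp: S_def)
  have symS: "sym_mat S" using S by (simp add: pos_def_def)
  have "q \<bullet> (A *v q) = (S *v q) \<bullet> (S *v q)"
    using sym_dot[OF symS, of q "S *v q"] by (simp add: S(2)[symmetric] matrix_vector_mul_assoc[symmetric])
  then show ?thesis by (simp add: wnorm_def S_def norm_eq_sqrt_inner)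
qed

lemma theta_xstar:
  fixes A :: "real^'n^'n"
  assumes pd: "pos_def A"
  shows "\<theta> \<bullet> xstar A x0 q = (if mat_sqrt A *v q = 0 then \<theta> \<bullet> x0 else
           ((mat_sqrt A *v \<theta>) \<bullet> (mat_sqrt A *v q)) / norm (mat_sqrt A *v q))"
proof -
  define S where "S = mat_sqrt A"
  have S: "pos_def S" "S ** S = A" using mat_sqrt[OF pd] by (auto simp: S_def)
  have symS: "sym_mat S" using S by (simp add: pos_def_def)
  have q0: "S *v q = 0 \<longleftrightarrow> q = 0" using pos_def_inj[OF S(1)] by auto
  have "\<theta> \<bullet> (A *v q) = (S *v \<theta>) \<bullet> (S *v q)"
    using sym_dot[OF symS, of \<theta> "S *v q"] by (simp add: S(2)[symmetric] matrix_vector_mul_assoc[symmetric])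
  then show ?thesis using q0 wnorm_sqrt[OF pd, of q]
    by (simp add: xstar_def S_def[symmetric])
qed

lemma x0_bound:
  fixes A :: "real^'n^'n"
  assumes pd: "pos_def A" and x0: "wnorm (matrix_inv A) x0 \<le> 1"
  shows "\<bar>\<theta> \<bullet> x0\<bar> \<le> norm (mat_sqrt A *v \<theta>)"
proof -
  define S where "S = mat_sqrt A"
  have S: "pos_def S" "S ** S = A" using mat_sqrt[OF pd] by (auto simp: S_def)
  have symS: "sym_mat S" using S by (simp add: pos_def_def)
  define Si where "Si = matrix_inv S"
  have Si: "S ** Si = mat 1" "Si ** S = mat 1" using pos_def_inv[OF S(1)] by (auto simp: Si_def)
  have "transpose (Si ** S) = mat 1" using Si by simp
  then have "S ** transpose Si = mat 1" using symS by (simp add: matrix_transpose_mul sym_mat_def)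
  then have "matrix_inv S = transpose Si" by (rule inv_eq)
  then have "transpose Si = Si" by (simp add: Si_def)
  then have symSi: "sym_mat Si" by (simp add: sym_mat_def)
  have Ainv: "matrix_inv A = Si ** Si"
  proof (rule inv_eq)
    have "A ** (Si ** Si) = S ** (S ** Si) ** Si" by (simp add: S(2)[symmetric] matrix_mul_assoc)
    then show "A ** (Si ** Si) = mat 1" by (simp add: Si)
  qed
  have "(Si *v x0) \<bullet> (Si *v x0) = x0 \<bullet> (matrix_inv A *v x0)"
    using sym_dot[OF symSi, of x0 "Si *v x0"] by (simp add: Ainv matrix_vector_mul_assoc)
  then have "norm (Si *v x0) \<le> 1" using x0 by (simp add: wnorm_def norm_eq_sqrt_inner)
  have "\<theta> \<bullet> x0 = \<theta> \<bullet> (S *v (Si *v x0))" by (simp add: matrix_vector_mul_assoc Si)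
  also have "\<dots> = (S *v \<theta>) \<bullet> (Si *v x0)" by (rule sym_dot[OF symS])
  finally have "\<bar>\<theta> \<bullet> x0\<bar> \<le> norm (S *v \<theta>) * norm (Si *v x0)"
    using Cauchy_Schwarz_ineq2 by metis
  also have "\<dots> \<le> norm (S *v \<theta>)" using \<open>norm (Si *v x0) \<le> 1\<close>
    by (simp add: mult_left_le)
  finally show ?thesis by (simp add: S_def)
qed




lemma nn_normal_density: "\<sigma> > 0 \<Longrightarrow> (\<integral>\<^sup>+x. ennreal (normal_density \<mu> \<sigma> x) \<partial>lborel) = 1"
  by (subst nn_integral_eq_integral) (auto simp: integral_normal_density)

lemma gauss_mgf:
  "(\<integral>\<^sup>+g. ennreal (exp (b * g) * std_normal_density g) \<partial>lborel) = ennreal (exp (b^2 / 2))"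
proof -
  have "exp (b * g) * std_normal_density g = exp (b^2 / 2) * normal_density b 1 g" for g
  proof -
    have "exp (b * g) * exp (- g\<^sup>2 / 2) = exp (b^2 / 2) * exp (- (g - b)\<^sup>2 / 2)"
      by (simp add: exp_add[symmetric] power2_eq_square algebra_simps diff_divide_distrib add_divide_distrib)
    then show ?thesis by (simp add: std_normal_density_def normal_density_def)
  qed
  then have "(\<integral>\<^sup>+g. ennreal (exp (b * g) * std_normal_density g) \<partial>lborel)
      = (\<integral>\<^sup>+g. ennreal (exp (b^2 / 2)) * ennreal (normal_density b 1 g) \<partial>lborel)"
    by (simp add: ennreal_mult)
  also have "\<dots> = ennreal (exp (b^2 / 2)) * (\<integral>\<^sup>+g. ennreal (normal_density b 1 g) \<partial>lborel)"
    by (rule nn_integral_cmult) simp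
  also have "\<dots> = ennreal (exp (b^2 / 2))" by (simp add: nn_normal_density)
  finally show ?thesis .
qed

lemma gauss_sq:
  assumes c: "0 \<le> c" "c < 1/2"
  shows "(\<integral>\<^sup>+g. ennreal (exp (c * g^2) * std_normal_density g) \<partial>lborel) = ennreal (1 / sqrt (1 - 2 * c))"
proof -
  define \<tau> where "\<tau> = 1 / sqrt (1 - 2 * c)"
  have pos: "1 - 2 * c > 0" using c by simp
  have tau: "\<tau> > 0" using pos by (simp add: \<tau>_def)
  have tau2: "\<tau>^2 = 1 / (1 - 2 * c)" using pos by (simp add: \<tau>_def power_divide)
  have "exp (c * g^2) * std_normal_density g = \<tau> * normal_density 0 \<tau> g" for g
  proof -
    have e: "exp (c * g^2) * exp (- g\<^sup>2 / 2) = exp (- (g\<^sup>2) / (2 * \<tau>\<^sup>2))"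
      using pos by (simp add: exp_add[symmetric] tau2 field_simps)
    have "sqrt (2 * pi * \<tau>\<^sup>2) = sqrt (2 * pi) * \<tau>" using tau by (simp add: real_sqrt_mult)
    then show ?thesis using tau e by (simp add: std_normal_density_def normal_density_def field_simps)
  qed
  then have "(\<integral>\<^sup>+g. ennreal (exp (c * g^2) * std_normal_density g) \<partial>lborel)
      = (\<integral>\<^sup>+g. ennreal \<tau> * ennreal (normal_density 0 \<tau> g) \<partial>lborel)"
    using tau by (simp add: ennreal_mult)
  also have "\<dots> = ennreal \<tau> * (\<integral>\<^sup>+g. ennreal (normal_density 0 \<tau> g) \<partial>lborel)"
    by (rule nn_integral_cmult) simp
  also have "\<dots> = ennreal \<tau>" using tau by (simp add: nn_normal_density)
  finally show ?thesis by (simp add: \<tau>_def)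
qed

lemma cosh_quad: "2 + x^2 \<le> exp x + exp (- (x::real))"
proof -
  have s: "(\<lambda>n. if even n then x ^ n /\<^sub>R fact n else 0) sums cosh x" by (rule cosh_converges)
  have "(\<Sum>n\<in>{..<3}. (if even n then x ^ n /\<^sub>R fact n else 0)) \<le> (\<Sum>n. if even n then x ^ n /\<^sub>R fact n else 0)"
    by (rule sum_le_suminf) (use s in \<open>auto simp: sums_iff zero_le_even_power\<close>)
  also have "\<dots> = cosh x" using s by (simp add: sums_iff)
  finally have "1 + x^2 / 2 \<le> cosh x" by (simp add: eval_nat_numeral)
  then show ?thesis by (simp add: cosh_field_def)
qed


lemma exp_minus_one_le: "exp x - 1 \<le> x * exp (x::real)"
proof -
  have "1 - x \<le> exp (- x)" using exp_ge_add_one_self[of "-x"] by simp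
  then have "(1 - x) * exp x \<le> exp (-x) * exp x" by (simp add: mult_right_mono)
  then show ?thesis by (simp add: exp_minus_inverse algebra_simps)
qed

lemma sg_sq:
  fixes Z :: "'a \<Rightarrow> real"
  assumes ps: "prob_space M" and sg: "subgaussian M s2 Z" and Zm: "Z \<in> borel_measurable M" and s2: "s2 > 0"
  shows "integrable M (\<lambda>w. (Z w)^2) \<and> (\<integral>w. (Z w)^2 \<partial>M) \<le> s2"
proof -
  interpret prob_space M by (rule ps)
  have ie: "integrable M (\<lambda>w. exp (l * Z w))" for l using sg by (simp add: subgaussian_def)
  have be: "(\<integral>w. exp (l * Z w) \<partial>M) \<le> exp (l\<^sup>2 * s2 / 2)" for l using sg by (simp add: subgaussian_def)
  have ptw: "(Z w)^2 \<le> (exp (l * Z w) + exp ((- l) * Z w) - 2) / l^2" if l: "l > 0" for l w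
  proof -
    have "2 + (l * Z w)^2 \<le> exp (l * Z w) + exp (- (l * Z w))" by (rule cosh_quad)
    then have "l^2 * (Z w)^2 \<le> exp (l * Z w) + exp ((- l) * Z w) - 2" by (simp add: power_mult_distrib)
    then show ?thesis using l by (simp add: pos_le_divide_eq mult.commute)
  qed
  have int_g: "integrable M (\<lambda>w. (exp (l * Z w) + exp ((- l) * Z w) - 2) / l^2)" for l
    using ie[of l] ie[of "-l"] by (intro integrable_divide integrable_diff integrable_add) auto
  have intZ: "integrable M (\<lambda>w. (Z w)^2)"
  proof (rule Bochner_Integration.integrable_bound[OF int_g[of 1]])
    show "(\<lambda>w. (Z w)^2) \<in> borel_measurable M" using Zm by measurable
    show "AE w in M. norm ((Z w)^2) \<le> norm ((exp (1 * Z w) + exp ((- 1) * Z w) - 2) / 1^2)"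
      using ptw[of 1] by (auto intro!: AE_I2 order_trans[OF _ abs_ge_self])
  qed
  have bnd: "(\<integral>w. (Z w)^2 \<partial>M) \<le> s2 * exp (l^2 * s2 / 2)" if l: "l > 0" for l
  proof -
    have "(\<integral>w. (Z w)^2 \<partial>M) \<le> (\<integral>w. (exp (l * Z w) + exp ((- l) * Z w) - 2) / l^2 \<partial>M)"
      by (rule integral_mono[OF intZ int_g]) (use ptw l in auto)
    also have "\<dots> = ((\<integral>w. exp (l * Z w) \<partial>M) + (\<integral>w. exp ((- l) * Z w) \<partial>M) - 2) / l^2"
      using ie[of l] ie[of "-l"] by (simp add: prob_space)
    also have "\<dots> \<le> (2 * exp (l^2 * s2 / 2) - 2) / l^2"
      using be[of l] be[of "-l"] l by (simp add: divide_right_mono)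
    also have "\<dots> \<le> s2 * exp (l^2 * s2 / 2)"
    proof -
      have "2 * exp (l^2 * s2 / 2) - 2 \<le> (s2 * exp (l^2 * s2 / 2)) * l^2"
        using exp_minus_one_le[of "l^2 * s2 / 2"] by (simp add: algebra_simps)
      then show ?thesis using l by (simp add: pos_divide_le_eq)
    qed
    finally show ?thesis .
  qed
  have "(\<integral>w. (Z w)^2 \<partial>M) \<le> s2 + e" if e: "e > 0" for e
  proof -
    define l where "l = sqrt (2 * ln (1 + e / s2) / s2)"
    have "1 < 1 + e / s2" using e s2 by simp
    then have lnpos: "ln (1 + e / s2) > 0" by (rule ln_gt_zero)
    have l: "l > 0" using lnpos s2 by (simp add: l_def)
    have "l^2 * s2 / 2 = ln (1 + e / s2)" using lnpos s2 by (simp add: l_def)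
    then have "exp (l^2 * s2 / 2) = 1 + e / s2" using \<open>1 < 1 + e / s2\<close> by simp
    then have "s2 * exp (l^2 * s2 / 2) = s2 + e" using s2 by (simp add: field_simps)
    then show ?thesis using bnd[OF l] by simp
  qed
  then have "(\<integral>w. (Z w)^2 \<partial>M) \<le> s2" by (rule field_le_epsilon)
  then show ?thesis using intZ by simp
qed


lemma mgf_sq:
  fixes Y :: "'a \<Rightarrow> real"
  assumes ps: "prob_space M" and Ym: "Y \<in> borel_measurable M"
    and mgf: "\<And>\<mu>. (\<integral>\<^sup>+w. ennreal (exp (\<mu> * Y w)) \<partial>M) \<le> ennreal (exp (\<mu>^2 * s2 / 2))"
    and s2: "s2 \<ge> 0" and lam: "0 \<le> lam" "2 * lam * s2 < 1"
  shows "(\<integral>\<^sup>+w. ennreal (exp (lam * (Y w)^2)) \<partial>M) \<le> ennreal (1 / sqrt (1 - 2 * lam * s2))"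
proof -
  interpret prob_space M by (rule ps)
  interpret P: pair_sigma_finite M lborel
    by (intro pair_sigma_finite.intro) (simp_all add: sigma_finite_measure_axioms lborel.sigma_finite_measure_axioms)
  define a where "a = sqrt (2 * lam)"
  have a2: "a^2 = 2 * lam" using lam by (simp add: a_def)
  have "(\<integral>\<^sup>+w. ennreal (exp (lam * (Y w)^2)) \<partial>M)
      = (\<integral>\<^sup>+w. (\<integral>\<^sup>+g. ennreal (exp ((a * Y w) * g) * std_normal_density g) \<partial>lborel) \<partial>M)"
  proof (rule nn_integral_cong)
    fix w
    have "(a * Y w)^2 / 2 = lam * (Y w)^2" by (simp add: power_mult_distrib a2)
    then show "ennreal (exp (lam * (Y w)^2)) = (\<integral>\<^sup>+g. ennreal (exp ((a * Y w) * g) * std_normal_density g) \<partial>lborel)"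
      by (simp add: gauss_mgf)
  qed
  also have "\<dots> = (\<integral>\<^sup>+g. (\<integral>\<^sup>+w. ennreal (exp ((a * Y w) * g) * std_normal_density g) \<partial>M) \<partial>lborel)"
    by (rule P.Fubini'[symmetric]) (use Ym in measurable)
  also have "\<dots> \<le> (\<integral>\<^sup>+g. ennreal (exp ((lam * s2) * g^2) * std_normal_density g) \<partial>lborel)"
  proof (rule nn_integral_mono)
    fix g
    have "(\<integral>\<^sup>+w. ennreal (exp ((a * Y w) * g) * std_normal_density g) \<partial>M)
        = (\<integral>\<^sup>+w. ennreal (exp ((a * g) * Y w)) * ennreal (std_normal_density g) \<partial>M)"
      by (simp add: ennreal_mult mult_ac)
    also have "\<dots> = (\<integral>\<^sup>+w. ennreal (exp ((a * g) * Y w)) \<partial>M) * ennreal (std_normal_density g)"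
      by (rule nn_integral_multc) (use Ym in measurable)
    also have "\<dots> \<le> ennreal (exp ((a * g)^2 * s2 / 2)) * ennreal (std_normal_density g)"
      by (rule mult_right_mono[OF mgf]) simp
    also have "(a * g)^2 * s2 / 2 = (lam * s2) * g^2" by (simp add: power_mult_distrib a2)
    finally show "(\<integral>\<^sup>+w. ennreal (exp ((a * Y w) * g) * std_normal_density g) \<partial>M)
        \<le> ennreal (exp ((lam * s2) * g^2) * std_normal_density g)"
      by (simp add: ennreal_mult)
  qed
  also have "\<dots> = ennreal (1 / sqrt (1 - 2 * (lam * s2)))"
    by (rule gauss_sq) (use lam s2 in auto)
  finally show ?thesis by (simp add: mult.assoc)
qed


lemma mgf_sum:
  fixes z :: "nat \<Rightarrow> 'a \<Rightarrow> real"
  assumes ps: "prob_space M" and ind: "prob_space.indep_vars M (\<lambda>_. borel) z I"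
    and T: "finite T" "T \<subseteq> I"
    and sg: "\<And>t. t \<in> T \<Longrightarrow> subgaussian M s2 (z t)"
    and zm: "\<And>t. t \<in> T \<Longrightarrow> z t \<in> borel_measurable M"
  shows "(\<integral>\<^sup>+w. ennreal (exp (\<mu> * (\<Sum>t\<in>T. z t w))) \<partial>M) \<le> ennreal (exp (\<mu>^2 * (real (card T) * s2) / 2))"
proof -
  interpret prob_space M by (rule ps)
  have indT: "indep_vars (\<lambda>_. borel) z T" using indep_vars_subset[OF ind T(2)] .
  have ind2: "indep_vars (\<lambda>_. borel) (\<lambda>t w. ennreal (exp (\<mu> * z t w))) T"
    using indep_vars_compose2[OF indT, of "\<lambda>t x. ennreal (exp (\<mu> * x))" "\<lambda>_. borel"] by simp
  have "(\<integral>\<^sup>+w. ennreal (exp (\<mu> * (\<Sum>t\<in>T. z t w))) \<partial>M) = (\<integral>\<^sup>+w. (\<Prod>t\<in>T. ennreal (exp (\<mu> * z t w))) \<partial>M)"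
    by (simp add: prod_ennreal sum_distrib_left exp_sum T(1))
  also have "\<dots> = (\<Prod>t\<in>T. \<integral>\<^sup>+w. ennreal (exp (\<mu> * z t w)) \<partial>M)"
    by (rule indep_vars_nn_integral[OF T(1) ind2]) simp
  also have "\<dots> \<le> (\<Prod>t\<in>T. ennreal (exp (\<mu>^2 * s2 / 2)))"
  proof (rule prod_mono_ennreal)
    fix t assume t: "t \<in> T"
    have "(\<integral>\<^sup>+w. ennreal (exp (\<mu> * z t w)) \<partial>M) = ennreal (\<integral>w. exp (\<mu> * z t w) \<partial>M)"
      using sg[OF t] by (intro nn_integral_eq_integral) (auto simp: subgaussian_def)
    also have "\<dots> \<le> ennreal (exp (\<mu>^2 * s2 / 2))"
      using sg[OF t] by (intro ennreal_leI) (simp add: subgaussian_def)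
    finally show "(\<integral>\<^sup>+w. ennreal (exp (\<mu> * z t w)) \<partial>M) \<le> ennreal (exp (\<mu>^2 * s2 / 2))" .
  qed
  also have "\<dots> = ennreal (exp (\<mu>^2 * (real (card T) * s2) / 2))"
  proof -
    have "(\<Prod>t\<in>T. ennreal (exp (\<mu>^2 * s2 / 2))) = ennreal (exp (\<mu>^2 * s2 / 2) ^ card T)"
      by (simp add: ennreal_power)
    also have "exp (\<mu>^2 * s2 / 2) ^ card T = exp (\<mu>^2 * (real (card T) * s2) / 2)"
      by (simp add: exp_of_nat_mult[symmetric] algebra_simps)
    finally show ?thesis .
  qed
  finally show ?thesis .
qed



lemma zeta_comp:
  fixes z :: "nat \<Rightarrow> 'a \<Rightarrow> real" and enum :: "nat \<Rightarrow> 'n::finite"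
  shows "(\<Sum>t<Ne. z t w *\<^sub>R axis (enum (t mod CARD('n))) (1::real)) $ i
     = (\<Sum>t\<in>{t\<in>{..<Ne}. enum (t mod CARD('n)) = i}. z t w)"
proof -
  have "(\<Sum>t<Ne. z t w *\<^sub>R axis (enum (t mod CARD('n))) (1::real)) $ i
      = (\<Sum>t<Ne. if enum (t mod CARD('n)) = i then z t w else 0)"
    by (simp add: sum_component axis_def eq_commute[of i] cong: if_cong) (intro sum.cong, auto)
  also have "\<dots> = (\<Sum>t\<in>{t\<in>{..<Ne}. enum (t mod CARD('n)) = i}. z t w)"
    by (rule sum.inter_filter[symmetric]) simp
  finally show ?thesis .
qed

lemma blk_card:
  fixes enum :: "nat \<Rightarrow> 'n::finite"
  assumes bij: "bij_betw enum {..<CARD('n)} UNIV" and Ne: "Ne = q * CARD('n)"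
  shows "card {t\<in>{..<Ne}. enum (t mod CARD('n)) = i} = q"
proof -
  have "card {t\<in>{..<Ne}. enum (t mod CARD('n)) = i} = (\<Sum>t<Ne. if enum (t mod CARD('n)) = i then 1 else 0)"
    by (simp add: sum.inter_filter[symmetric])
  also have "\<dots> = (\<Sum>m<q. \<Sum>j\<in>UNIV. if j = i then 1 else (0::nat))"
    unfolding Ne by (rule cyc_sum[OF bij, of "\<lambda>j. if j = i then 1 else 0"])
  also have "\<dots> = q" by simp
  finally show ?thesis .
qed

lemma norm_sq_comp: "(norm (x::real^'n))^2 = (\<Sum>i\<in>UNIV. (x $ i)^2)"
proof -
  have "(norm x)^2 = x \<bullet> x" by (rule power2_norm_eq_inner)
  also have "\<dots> = (\<Sum>i\<in>UNIV. x $ i * x $ i)" by (simp add: inner_vec_def)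
  finally show ?thesis by (simp add: power2_eq_square)
qed

lemma sqrt3_le: "sqrt 3 \<le> exp (2/3::real)"
proof -
  have "1 + 4/3 + (4/3)^2/2 \<le> exp (4/3::real)" by (rule exp_lower_Taylor_quadratic) simp
  moreover have "(3::real) \<le> 1 + 4/3 + (4/3)^2/2" by (simp add: power2_eq_square)
  ultimately have "3 \<le> exp (4/3::real)" by linarith
  moreover have "exp (4/3::real) = (exp (2/3))^2" by (simp add: exp_double[symmetric])
  ultimately have "3 \<le> (exp (2/3::real))^2" by simp
  then have "sqrt 3 \<le> sqrt ((exp (2/3::real))^2)" by (rule real_sqrt_le_mono)
  then show ?thesis by simp
qed


lemma tail_bound:
  fixes z :: "nat \<Rightarrow> 'a \<Rightarrow> real" and enum :: "nat \<Rightarrow> 'n::finite"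
  assumes ps: "prob_space M" and ind: "prob_space.indep_vars M (\<lambda>_. borel) z {..<Ne}"
    and zm: "\<And>t. t < Ne \<Longrightarrow> z t \<in> borel_measurable M"
    and sg: "\<And>t. t < Ne \<Longrightarrow> subgaussian M (\<sigma>\<^sup>2) (z t)"
    and sig: "\<sigma> > 0" and bij: "bij_betw enum {..<CARD('n)} UNIV"
    and Ne: "Ne = q * CARD('n)" and q: "q > 0" and r: "r \<ge> 0"
  shows "emeasure M {w \<in> space M. r \<le> norm ((1 / real q) *\<^sub>R (\<Sum>t<Ne. z t w *\<^sub>R axis (enum (t mod CARD('n))) (1::real)))}
    \<le> ennreal (exp (2 * real CARD('n) / 3 - real q * r\<^sup>2 / (3 * \<sigma>\<^sup>2)))"
proof -
  interpret prob_space M by (rule ps)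
  define d where "d = CARD('n)"
  define Blk where "Blk i = {t\<in>{..<Ne}. enum (t mod d) = i}" for i
  define Y where "Y i w = (1 / real q) * (\<Sum>t\<in>Blk i. z t w)" for i w
  define \<xi> where "\<xi> w = (1 / real q) *\<^sub>R (\<Sum>t<Ne. z t w *\<^sub>R axis (enum (t mod CARD('n))) (1::real))" for w
  define lam where "lam = real q / (3 * \<sigma>\<^sup>2)"
  have lam: "lam > 0" using q sig by (simp add: lam_def)
  have Blk_sub: "Blk i \<subseteq> {..<Ne}" for i by (auto simp: Blk_def)
  have Blk_fin: "finite (Blk i)" for i by (auto simp: Blk_def)
  have Blk_card: "card (Blk i) = q" for i using blk_card[OF bij Ne] by (simp add: Blk_def d_def)
  have xi_comp: "\<xi> w $ i = Y i w" for w i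
    using zeta_comp[where z=z and w=w and enum=enum and i=i and Ne=Ne] by (simp add: \<xi>_def Y_def Blk_def d_def)
  have zmB: "z t \<in> borel_measurable M" if "t \<in> Blk i" for t i using zm that by (auto simp: Blk_def)
  have Ym: "Y i \<in> borel_measurable M" for i
    unfolding Y_def by (intro borel_measurable_times borel_measurable_const borel_measurable_sum zmB)
  have xim: "\<xi> \<in> borel_measurable M"
    unfolding \<xi>_def using zm
    by (intro borel_measurable_scaleR borel_measurable_const borel_measurable_sum) auto
  have normsq: "(norm (\<xi> w))^2 = (\<Sum>i\<in>UNIV. (Y i w)^2)" for w
    by (simp add: norm_sq_comp xi_comp)
  define A where "A = {w \<in> space M. r \<le> norm (\<xi> w)}"
  have Asets: "A \<in> sets M" unfolding A_def using xim by measurable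
  have "emeasure M A = (\<integral>\<^sup>+w. indicator A w \<partial>M)" using Asets by simp
  also have "\<dots> \<le> (\<integral>\<^sup>+w. ennreal (exp (- lam * r\<^sup>2)) * ennreal (exp (lam * (norm (\<xi> w))^2)) \<partial>M)"
  proof (rule nn_integral_mono)
    fix w assume "w \<in> space M"
    show "indicator A w \<le> ennreal (exp (- lam * r\<^sup>2)) * ennreal (exp (lam * (norm (\<xi> w))^2))"
    proof (cases "w \<in> A")
      case True
      then have "r \<le> norm (\<xi> w)" by (simp add: A_def)
      then have "r\<^sup>2 \<le> (norm (\<xi> w))^2" using r by (simp add: power_mono)
      then have "0 \<le> lam * ((norm (\<xi> w))^2 - r\<^sup>2)" using lam by simp
      then have "1 \<le> exp (lam * ((norm (\<xi> w))^2 - r\<^sup>2))" by simp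
      also have "\<dots> = exp (- lam * r\<^sup>2) * exp (lam * (norm (\<xi> w))^2)"
        by (simp add: exp_add[symmetric] algebra_simps)
      finally have "ennreal 1 \<le> ennreal (exp (- lam * r\<^sup>2) * exp (lam * (norm (\<xi> w))^2))"
        by (rule ennreal_leI)
      then show ?thesis using True by (simp add: ennreal_mult)
    next
      case False then show ?thesis by simp
    qed
  qed
  also have "\<dots> = ennreal (exp (- lam * r\<^sup>2)) * (\<integral>\<^sup>+w. ennreal (exp (lam * (norm (\<xi> w))^2)) \<partial>M)"
    by (rule nn_integral_cmult) (use xim in measurable)
  also have "(\<integral>\<^sup>+w. ennreal (exp (lam * (norm (\<xi> w))^2)) \<partial>M) = (\<integral>\<^sup>+w. (\<Prod>i\<in>UNIV. ennreal (exp (lam * (Y i w)^2))) \<partial>M)"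
    by (simp add: normsq prod_ennreal sum_distrib_left exp_sum)
  also have "\<dots> = (\<Prod>i\<in>UNIV. \<integral>\<^sup>+w. ennreal (exp (lam * (Y i w)^2)) \<partial>M)"
  proof -
    define F where "F i f = ennreal (exp (lam * ((1 / real q) * (\<Sum>t\<in>Blk i. f t))^2))" for i and f :: "nat \<Rightarrow> real"
    have disj: "disjoint_family_on Blk UNIV" by (auto simp: disjoint_family_on_def Blk_def)
    have ind1: "indep_vars (\<lambda>i. PiM (Blk i) (\<lambda>_. borel)) (\<lambda>i w. restrict (\<lambda>t. z t w) (Blk i)) UNIV"
      by (rule indep_vars_restrict[OF ind Blk_sub disj])
    have Fm: "F i \<in> PiM (Blk i) (\<lambda>_. borel) \<rightarrow>\<^sub>M borel" for i
    proof -
      have "(\<lambda>f. \<Sum>t\<in>Blk i. f t) \<in> borel_measurable (PiM (Blk i) (\<lambda>_. (borel :: real measure)))"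
        by measurable
      then show ?thesis unfolding F_def by measurable
    qed
    have ind2: "indep_vars (\<lambda>_. borel) (\<lambda>i w. F i (restrict (\<lambda>t. z t w) (Blk i))) UNIV"
      by (rule indep_vars_compose2[OF ind1 Fm])
    have eqF: "F i (restrict (\<lambda>t. z t w) (Blk i)) = ennreal (exp (lam * (Y i w)^2))" for i w
      unfolding F_def Y_def by (simp cong: sum.cong)
    have "(\<integral>\<^sup>+w. (\<Prod>i\<in>UNIV. F i (restrict (\<lambda>t. z t w) (Blk i))) \<partial>M)
        = (\<Prod>i\<in>UNIV. \<integral>\<^sup>+w. F i (restrict (\<lambda>t. z t w) (Blk i)) \<partial>M)"
      by (rule indep_vars_nn_integral[OF finite ind2]) simp
    then show ?thesis by (simp add: eqF)
  qed
  also have "\<dots> \<le> (\<Prod>i\<in>(UNIV::'n set). ennreal (sqrt 3))"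
  proof (rule prod_mono_ennreal)
    fix i :: 'n
    have mgf: "(\<integral>\<^sup>+w. ennreal (exp (\<mu> * Y i w)) \<partial>M) \<le> ennreal (exp (\<mu>^2 * (\<sigma>\<^sup>2 / real q) / 2))" for \<mu>
    proof -
      have "(\<integral>\<^sup>+w. ennreal (exp (\<mu> * Y i w)) \<partial>M) = (\<integral>\<^sup>+w. ennreal (exp ((\<mu> / real q) * (\<Sum>t\<in>Blk i. z t w))) \<partial>M)"
        by (simp add: Y_def)
      also have "\<dots> \<le> ennreal (exp ((\<mu> / real q)^2 * (real (card (Blk i)) * \<sigma>\<^sup>2) / 2))"
        by (rule mgf_sum[OF ps ind Blk_fin Blk_sub]) (use sg zm Blk_sub in auto)
      also have "(\<mu> / real q)^2 * (real (card (Blk i)) * \<sigma>\<^sup>2) / 2 = \<mu>^2 * (\<sigma>\<^sup>2 / real q) / 2"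
        using q by (simp add: Blk_card power2_eq_square field_simps)
      finally show ?thesis .
    qed
    have "(\<integral>\<^sup>+w. ennreal (exp (lam * (Y i w)^2)) \<partial>M) \<le> ennreal (1 / sqrt (1 - 2 * lam * (\<sigma>\<^sup>2 / real q)))"
      by (rule mgf_sq[OF ps Ym mgf]) (use lam q sig in \<open>auto simp: lam_def\<close>)
    also have "2 * lam * (\<sigma>\<^sup>2 / real q) = 2 / 3" using q sig by (simp add: lam_def)
    also have "1 / sqrt (1 - 2 / 3) = sqrt (3::real)"
      by (simp add: real_sqrt_divide)
    finally show "(\<integral>\<^sup>+w. ennreal (exp (lam * (Y i w)^2)) \<partial>M) \<le> ennreal (sqrt 3)" .
  qed
  also have "(\<Prod>i\<in>(UNIV::'n set). ennreal (sqrt 3)) \<le> ennreal (exp (2 * real CARD('n) / 3))"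
  proof -
    have "(\<Prod>i\<in>(UNIV::'n set). ennreal (sqrt 3)) = ennreal (sqrt 3 ^ CARD('n))"
      by (simp add: ennreal_power)
    also have "sqrt 3 ^ CARD('n) \<le> exp (2/3) ^ CARD('n)"
      by (rule power_mono[OF sqrt3_le]) simp
    also have "exp (2/3) ^ CARD('n) = exp (2 * real CARD('n) / 3)"
      by (simp add: exp_of_nat_mult[symmetric] algebra_simps)
    finally show ?thesis by (simp add: ennreal_leI)
  qed
  finally have "emeasure M A \<le> ennreal (exp (- lam * r\<^sup>2)) * ennreal (exp (2 * real CARD('n) / 3))"
    by (simp add: mult_left_mono)
  also have "\<dots> = ennreal (exp (2 * real CARD('n) / 3 - real q * r\<^sup>2 / (3 * \<sigma>\<^sup>2)))"
    by (simp add: ennreal_mult[symmetric] exp_add[symmetric] lam_def algebra_simps)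
  finally show ?thesis by (simp add: A_def \<xi>_def)
qed


lemma second_moment:
  fixes z :: "nat \<Rightarrow> 'a \<Rightarrow> real" and enum :: "nat \<Rightarrow> 'n::finite"
  assumes ps: "prob_space M" and ind: "prob_space.indep_vars M (\<lambda>_. borel) z {..<Ne}"
    and zm: "\<And>t. t < Ne \<Longrightarrow> z t \<in> borel_measurable M"
    and zi: "\<And>t. t < Ne \<Longrightarrow> integrable M (z t) \<and> (\<integral>w. z t w \<partial>M) = 0"
    and sg: "\<And>t. t < Ne \<Longrightarrow> subgaussian M (\<sigma>\<^sup>2) (z t)"
    and sig: "\<sigma> > 0"
  shows "integrable M (\<lambda>w. (norm ((1 / real q) *\<^sub>R (\<Sum>t<Ne. z t w *\<^sub>R axis (enum (t mod CARD('n))) (1::real))))^2)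
    \<and> (\<integral>w. (norm ((1 / real q) *\<^sub>R (\<Sum>t<Ne. z t w *\<^sub>R axis (enum (t mod CARD('n))) (1::real))))^2 \<partial>M)
        \<le> real Ne * \<sigma>\<^sup>2 / (real q)^2"
proof -
  interpret prob_space M by (rule ps)
  define e where "e t = axis (enum (t mod CARD('n))) (1::real)" for t
  define c where "c s t = e s \<bullet> e t" for s t  
  have css: "c s s = 1" for s by (simp add: c_def e_def inner_axis_axis)
  define g where "g w = (\<Sum>s<Ne. \<Sum>t<Ne. c t s * (z s w * z t w))" for w
  have nz: "(norm (\<Sum>t<Ne. z t w *\<^sub>R e t))^2 = g w" for w
    by (simp add: power2_norm_eq_inner inner_sum_left inner_sum_right g_def c_def mult_ac sum_distrib_left)
  have sq: "integrable M (\<lambda>w. (z s w)^2) \<and> (\<integral>w. (z s w)^2 \<partial>M) \<le> \<sigma>\<^sup>2" if "s < Ne" for s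
    using sg_sq[OF ps sg[OF that] zm[OF that]] sig by simp
  have pair: "integrable M (\<lambda>w. z s w * z t w) \<and> (\<integral>w. z s w * z t w \<partial>M) = 0"
    if st: "s < Ne" "t < Ne" "s \<noteq> t" for s t
  proof -
    have ind2: "indep_vars (\<lambda>_. borel) z {s, t}" using indep_vars_subset[OF ind] st by auto
    have ii: "\<And>i. i \<in> {s, t} \<Longrightarrow> integrable M (z i)" using zi st by auto
    have p: "(\<Prod>i\<in>{s, t}. z i w) = z s w * z t w" for w using st by simp
    have "integrable M (\<lambda>w. \<Prod>i\<in>{s, t}. z i w)" by (rule indep_vars_integrable[OF _ ind2 ii]) simp
    moreover have "(\<integral>w. (\<Prod>i\<in>{s, t}. z i w) \<partial>M) = (\<Prod>i\<in>{s, t}. \<integral>w. z i w \<partial>M)"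
      by (rule indep_vars_lebesgue_integral[OF _ ind2 ii]) simp
    ultimately show ?thesis using zi st by (simp add: p)
  qed
  have term_int: "integrable M (\<lambda>w. c t s * (z s w * z t w))" if "s < Ne" "t < Ne" for s t
  proof (cases "s = t")
    case True then show ?thesis using sq[OF that(1)] by (simp add: power2_eq_square)
  next
    case False then show ?thesis using pair[OF that False] by simp
  qed
  have gi: "integrable M g" unfolding g_def
    by (intro Bochner_Integration.integrable_sum) (use term_int in auto)
  have "(\<integral>w. g w \<partial>M) = (\<Sum>s<Ne. \<Sum>t<Ne. \<integral>w. c t s * (z s w * z t w) \<partial>M)"
    unfolding g_def using term_int
    by (subst Bochner_Integration.integral_sum) (auto intro!: Bochner_Integration.integrable_sum sum.cong Bochner_Integration.integral_sum)
  also have "\<dots> = (\<Sum>s<Ne. \<integral>w. (z s w)^2 \<partial>M)"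
  proof (rule sum.cong[OF refl])
    fix s assume s: "s \<in> {..<Ne}"
    have "(\<Sum>t<Ne. \<integral>w. c t s * (z s w * z t w) \<partial>M) = (\<Sum>t<Ne. if t = s then \<integral>w. (z s w)^2 \<partial>M else 0)"
    proof (rule sum.cong[OF refl])
      fix t assume t: "t \<in> {..<Ne}"
      show "(\<integral>w. c t s * (z s w * z t w) \<partial>M) = (if t = s then \<integral>w. (z s w)^2 \<partial>M else 0)"
        using pair[of s t] s t by (auto simp: css power2_eq_square)
    qed
    also have "\<dots> = (\<integral>w. (z s w)^2 \<partial>M)" using s by simp
    finally show "(\<Sum>t<Ne. \<integral>w. c t s * (z s w * z t w) \<partial>M) = (\<integral>w. (z s w)^2 \<partial>M)" .
  qed
  also have "\<dots> \<le> (\<Sum>s<Ne. \<sigma>\<^sup>2)" by (rule sum_mono) (use sq in auto)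
  finally have gb: "(\<integral>w. g w \<partial>M) \<le> real Ne * \<sigma>\<^sup>2" by simp
  have eq: "(norm ((1 / real q) *\<^sub>R (\<Sum>t<Ne. z t w *\<^sub>R e t)))^2 = (1 / real q)^2 * g w" for w
    by (simp add: nz[symmetric] power_divide)
  show ?thesis
  proof
    show "integrable M (\<lambda>w. (norm ((1 / real q) *\<^sub>R (\<Sum>t<Ne. z t w *\<^sub>R axis (enum (t mod CARD('n))) (1::real))))^2)"
      using eq gi unfolding e_def by simp
    have "(\<integral>w. (norm ((1 / real q) *\<^sub>R (\<Sum>t<Ne. z t w *\<^sub>R e t)))^2 \<partial>M) = (1 / real q)^2 * (\<integral>w. g w \<partial>M)"
      by (simp only: eq integral_mult_right_zero)
    also have "\<dots> \<le> (1 / real q)^2 * (real Ne * \<sigma>\<^sup>2)" by (rule mult_left_mono[OF gb]) simp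
    finally show "(\<integral>w. (norm ((1 / real q) *\<^sub>R (\<Sum>t<Ne. z t w *\<^sub>R axis (enum (t mod CARD('n))) (1::real))))^2 \<partial>M)
        \<le> real Ne * \<sigma>\<^sup>2 / (real q)^2" unfolding e_def by (simp add: power_divide)
  qed
qed



theorem lemma2:
  fixes M :: "'a measure"
    and A :: "real^'n^'n" and \<theta> x0 :: "real^'n"
    and \<sigma> :: real and Ne :: nat
    and enum :: "nat \<Rightarrow> 'n"
    and z :: "nat \<Rightarrow> 'a \<Rightarrow> real"
  assumes "prob_space M"
    and "\<sigma> > 0"
    and "pos_def A"
    and "\<theta> \<noteq> 0"
    and "Ne > 0" and "CARD('n) dvd Ne"
    and "bij_betw enum {..<CARD('n)} UNIV"
    and "prob_space.indep_vars M (\<lambda>_. borel) z {..<Ne}"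
    and "\<And>t. t < Ne \<Longrightarrow> z t \<in> borel_measurable M"
    and "\<And>t. t < Ne \<Longrightarrow> integrable M (z t) \<and> (\<integral>w. z t w \<partial>M) = 0"
    and "\<And>t. t < Ne \<Longrightarrow> subgaussian M (\<sigma>\<^sup>2) (z t)"
    and "wnorm (matrix_inv A) x0 \<le> 1"
  defines "x \<equiv> (\<lambda>t. mat_sqrt A *v axis (enum (t mod CARD('n))) 1)"
    and "y \<equiv> (\<lambda>w t. (mat_sqrt A *v axis (enum (t mod CARD('n))) 1) \<bullet> \<theta> + z t w)"
    and "d \<equiv> real CARD('n)"
  shows "integrable M (\<lambda>w. \<theta> \<bullet> (xstar A x0 \<theta> - xstar A x0 (ols Ne x (y w))))
    \<and> (\<integral>w. \<theta> \<bullet> (xstar A x0 \<theta> - xstar A x0 (ols Ne x (y w))) \<partial>M)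
      \<le> d\<^sup>2 * \<sigma>\<^sup>2 / (wnorm A \<theta> * real Ne)
        + 2 * wnorm A \<theta> * exp (negpart (2 * d / 3 - real Ne * (wnorm A \<theta>)\<^sup>2 / (3 * \<sigma>\<^sup>2 * d)))"
proof -
  note ps = assms(1)
  interpret prob_space M by (rule ps)
  note sig = assms(2) and pd = assms(3) and th0 = assms(4) and Nepos = assms(5) and dvdN = assms(6)
    and bij = assms(7) and ind = assms(8) and zm = assms(9) and zi = assms(10) and sg = assms(11)
    and x0 = assms(12)
  define q where "q = Ne div CARD('n)"
  have Ne: "Ne = q * CARD('n)" using dvdN by (simp add: q_def)
  have q: "q > 0" using Ne Nepos by (cases q) auto
  define S where "S = mat_sqrt A"
  have S: "pos_def S" "S ** S = A" using mat_sqrt[OF pd] by (auto simp: S_def)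
  define u where "u = S *v \<theta>"
  have u0: "u \<noteq> 0" using pos_def_inj[OF S(1)] th0 by (auto simp: u_def)
  have wn: "wnorm A \<theta> = norm u" using wnorm_sqrt[OF pd] by (simp add: u_def S_def)
  have upos: "norm u > 0" using u0 by simp
  define c where "c = \<theta> \<bullet> x0"
  have c: "\<bar>c\<bar> \<le> norm u" using x0_bound[OF pd x0] by (simp add: c_def u_def S_def)
  define \<xi> where "\<xi> w = (1 / real q) *\<^sub>R (\<Sum>t<Ne. z t w *\<^sub>R axis (enum (t mod CARD('n))) (1::real))" for w
  define F where "F v = norm u - (if u + v = 0 then c else (u \<bullet> (u + v)) / norm (u + v))" for v
  have pt: "\<theta> \<bullet> (xstar A x0 \<theta> - xstar A x0 (ols Ne x (y w))) = F (\<xi> w)" for w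
  proof -
    have o: "S *v ols Ne x (y w) = u + \<xi> w"
      using ols_formula[OF pd Ne q bij, of \<theta> "\<lambda>t. z t w"]
      by (simp add: x_def y_def S_def u_def \<xi>_def)
    have t1: "\<theta> \<bullet> xstar A x0 \<theta> = norm u"
      using theta_xstar[OF pd, of \<theta> x0 \<theta>] u0
      by (simp add: S_def[symmetric] u_def[symmetric] power2_norm_eq_inner[symmetric] power2_eq_square)
    have t2: "\<theta> \<bullet> xstar A x0 (ols Ne x (y w)) = (if u + \<xi> w = 0 then c else (u \<bullet> (u + \<xi> w)) / norm (u + \<xi> w))"
      using theta_xstar[OF pd, of \<theta> x0 "ols Ne x (y w)"]
      by (simp add: S_def[symmetric] u_def[symmetric] o c_def)
    show ?thesis by (simp add: inner_diff_right t1 t2 F_def)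
  qed
  have xim: "\<xi> \<in> borel_measurable M"
    unfolding \<xi>_def using zm
    by (intro borel_measurable_scaleR borel_measurable_const borel_measurable_sum) auto
  have Fm: "F \<in> borel_measurable borel" unfolding F_def by measurable
  have Rm: "(\<lambda>w. F (\<xi> w)) \<in> borel_measurable M" using Fm xim by measurable
  have Rb: "\<bar>F v\<bar> \<le> 2 * norm u" for v unfolding F_def using regret_abs[OF c, of "u + v"] .
  have Rint: "integrable M (\<lambda>w. F (\<xi> w))"
  proof (rule Bochner_Integration.integrable_bound[OF integrable_const[of "2 * norm u"] Rm])
    show "AE w in M. norm (F (\<xi> w)) \<le> norm (2 * norm u)" using Rb by (auto intro!: AE_I2)
  qed
  define Aev where "Aev = {w \<in> space M. norm u \<le> norm (\<xi> w)}"
  have Asets: "Aev \<in> sets M" unfolding Aev_def using xim by measurable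
  have SM: "integrable M (\<lambda>w. (norm (\<xi> w))^2) \<and> (\<integral>w. (norm (\<xi> w))^2 \<partial>M) \<le> real Ne * \<sigma>\<^sup>2 / (real q)^2"
    using second_moment[OF ps ind zm zi sg sig, of q enum] by (simp add: \<xi>_def)
  have TB: "emeasure M Aev \<le> ennreal (exp (2 * real CARD('n) / 3 - real q * (norm u)\<^sup>2 / (3 * \<sigma>\<^sup>2)))"
    using tail_bound[OF ps ind zm sg sig bij Ne q, of "norm u"] by (simp add: Aev_def \<xi>_def)
  have bnd: "F (\<xi> w) \<le> (norm (\<xi> w))^2 / norm u + (2 * norm u) * indicator Aev w" if w: "w \<in> space M" for w
  proof -
    have "(2 * norm u) * indicator Aev w = (if norm u \<le> norm (\<xi> w) then 2 * norm u else 0)"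
      using w by (simp add: Aev_def indicator_def)
    then show ?thesis using regret_bound[OF u0 c, of "\<xi> w"] unfolding F_def by simp
  qed
  have intA: "integrable M (indicator Aev :: 'a \<Rightarrow> real)"
    by (rule integrable_real_indicator[OF Asets]) (simp add: less_top[symmetric])
  have int2: "integrable M (\<lambda>w. (norm (\<xi> w))^2 / norm u + (2 * norm u) * indicator Aev w)"
    using SM intA by (intro Bochner_Integration.integrable_add integrable_divide integrable_mult_right) auto
  have "(\<integral>w. F (\<xi> w) \<partial>M) \<le> (\<integral>w. (norm (\<xi> w))^2 / norm u + (2 * norm u) * indicator Aev w \<partial>M)"
    by (rule integral_mono[OF Rint int2]) (use bnd in auto)
  also have "\<dots> = (\<integral>w. (norm (\<xi> w))^2 \<partial>M) / norm u + (2 * norm u) * measure M Aev"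
    using SM intA Asets by (simp add: Bochner_Integration.integral_add integrable_mult_right)
  also have "\<dots> \<le> (real Ne * \<sigma>\<^sup>2 / (real q)^2) / norm u + (2 * norm u) * exp (negpart (2 * real CARD('n) / 3 - real q * (norm u)\<^sup>2 / (3 * \<sigma>\<^sup>2)))"
  proof (rule add_mono)
    show "(\<integral>w. (norm (\<xi> w))^2 \<partial>M) / norm u \<le> (real Ne * \<sigma>\<^sup>2 / (real q)^2) / norm u"
      using SM upos by (intro divide_right_mono) auto
    have m1: "measure M Aev \<le> 1" by (rule prob_le_1)
    have m2: "measure M Aev \<le> exp (2 * real CARD('n) / 3 - real q * (norm u)\<^sup>2 / (3 * \<sigma>\<^sup>2))"
      using TB by (simp add: emeasure_eq_measure)
    have "measure M Aev \<le> exp (negpart (2 * real CARD('n) / 3 - real q * (norm u)\<^sup>2 / (3 * \<sigma>\<^sup>2)))"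
      using m1 m2 by (simp add: negpart_def min_def)
    then show "(2 * norm u) * measure M Aev \<le> (2 * norm u) * exp (negpart (2 * real CARD('n) / 3 - real q * (norm u)\<^sup>2 / (3 * \<sigma>\<^sup>2)))"
      using upos by simp
  qed
  also have "(real Ne * \<sigma>\<^sup>2 / (real q)^2) / norm u = d\<^sup>2 * \<sigma>\<^sup>2 / (wnorm A \<theta> * real Ne)"
    using q Nepos by (simp add: wn d_def Ne power2_eq_square field_simps)
  also have "real q * (norm u)\<^sup>2 / (3 * \<sigma>\<^sup>2) = real Ne * (wnorm A \<theta>)\<^sup>2 / (3 * \<sigma>\<^sup>2 * d)"
    by (simp add: wn d_def Ne field_simps)
  finally have main: "(\<integral>w. F (\<xi> w) \<partial>M) \<le> d\<^sup>2 * \<sigma>\<^sup>2 / (wnorm A \<theta> * real Ne)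
        + 2 * wnorm A \<theta> * exp (negpart (2 * d / 3 - real Ne * (wnorm A \<theta>)\<^sup>2 / (3 * \<sigma>\<^sup>2 * d)))"
    by (simp add: wn d_def)
  have feq: "(\<lambda>w. \<theta> \<bullet> (xstar A x0 \<theta> - xstar A x0 (ols Ne x (y w)))) = (\<lambda>w. F (\<xi> w))"
    using pt by auto
  show ?thesis unfolding feq using Rint main by simp
qed


end
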